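(* Let $d\ge 2$ and identify $F_d(\mathfrak B)^2$ with $G_d^2\subset K[Y_d,Z_d]$ as described in the context. For each $n\ge2$ and each partition $\lambda=(\lambda_1,\lambda_2)\vdash n$, the following elements form a maximal linearly independent system of highest weight vectors of $GL_d$-submodules of $G_d^2$ isomorphic to $W(\lambda)$ (i.e. every such highest weight vector is a linear combination of them, and their number equals the multiplicity of $W(\lambda)$): $w^{(j)}_{(n)}=y_1^jz_1^{n-j}$ for $j=1,\dots,n-1$ if $\lambda=(n)$; and $w^{(j)}_\lambda=y_1^j(y_1z_2-y_2z_1)^{\lambda_2}z_1^{\lambda_1-\lambda_2-j}$ for $j=0,1,\dots,\lambda_1-\lambda_2$ if $\lambda_2>0$.
   Context: $K$ is a field of characteristic $0$. $\mathfrak B$ is the variety of bicommutative algebras (identities $(x_1x_2)x_3=(x_1x_3)x_2$, $x_1(x_2x_3)=x_2(x_1x_3)$) with free algebra $F_d(\mathfrak B)$ on $x_1,\dots,x_d$. Model: let $K[Y_d,Z_d]$ be the commutative polynomial ring in $y_1,\dots,y_d,z_1,\dots,z_d$, and $G_d$ the algebra with basis $\{x_1,\dots,x_d\}\cup\{Y^\alpha Z^\beta:|\alpha|>0,|\beta|>0\}$ and multiplication $x_ix_j=y_iz_j$, $x_i\cdot(Y^\alpha Z^\beta)=y_iY^\alpha Z^\beta$, $(Y^\alpha Z^\beta)\cdot x_j=Y^\alpha Z^\beta z_j$, $(Y^\alpha Z^\beta)(Y^\gamma Z^\delta)=Y^{\alpha+\gamma}Z^{\beta+\delta}$; it is known that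 $x_i\mapsto x_i$ gives an isomorphism $F_d(\mathfrak B)\cong G_d$ of multigraded algebras, so $F_d(\mathfrak B)^2$ is identified with $G_d^2$, the span of monomials of positive degree in both the $y$'s and the $z$'s. $GL_d$ acts on $G_d^2$ by acting on $\mathrm{span}(y_i)$ and on $\mathrm{span}(z_i)$ in the same way as on $\mathrm{span}(x_i)$, extended multiplicatively. $W(\lambda)$ is the irreducible polynomial $GL_d$-module indexed by $\lambda$; a highest weight vector of a submodule isomorphic to $W(\lambda)$ is a nonzero element of multidegree $\lambda$ (degree $\lambda_i$ in the pair $y_i,z_i$) generating it, equivalently annihilated by the derivations $y_j\mapsto y_i,z_j\mapsto z_i$ (other variables $\mapsto 0$) for all $i<j$. *)

theory Defs
  imports "HOL-Library.Poly_Mapping"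
begin

text \<open>Variables of K[Y_d,Z_d]: Yv i stands for y_i, Zv i for z_i (indices 1..d).\<close>
datatype var = Yv nat | Zv nat

fun vidx :: "var \<Rightarrow> nat" where
  "vidx (Yv i) = i" | "vidx (Zv i) = i"

type_synonym 'a pol = "(var \<Rightarrow>\<^sub>0 nat) \<Rightarrow>\<^sub>0 'a"

definition PVar :: "var \<Rightarrow> 'a::comm_ring_1 pol" where
  "PVar v = Poly_Mapping.single (Poly_Mapping.single v 1) 1"

definition PConst :: "'a::comm_ring_1 \<Rightarrow> 'a pol" where
  "PConst c = Poly_Mapping.single 0 c"

definition pderiv_var :: "var \<Rightarrow> 'a::comm_ring_1 pol \<Rightarrow> 'a pol" where
  "pderiv_var v p = (\<Sum>m\<in>Poly_Mapping.keys p.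
      Poly_Mapping.single (m - Poly_Mapping.single v (1::nat))
        (of_nat (Poly_Mapping.lookup (m :: var \<Rightarrow>\<^sub>0 nat) v) * Poly_Mapping.lookup p m))"

definition Dder :: "nat \<Rightarrow> nat \<Rightarrow> 'a::comm_ring_1 pol \<Rightarrow> 'a pol" where
  "Dder i j p = PVar (Yv i) * pderiv_var (Yv j) p + PVar (Zv i) * pderiv_var (Zv j) p"

definition G2 :: "nat \<Rightarrow> 'a::comm_ring_1 pol set" where
  "G2 d = {p. \<forall>m\<in>Poly_Mapping.keys p. (\<forall>v. Poly_Mapping.lookup m v > 0 \<longrightarrow> vidx v \<in> {1..d})
                \<and> (\<exists>i. Poly_Mapping.lookup m (Yv i) > 0) \<and> (\<exists>i. Poly_Mapping.lookup m (Zv i) > 0)}"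

definition has_multideg :: "(nat \<Rightarrow> nat) \<Rightarrow> 'a::comm_ring_1 pol \<Rightarrow> bool" where
  "has_multideg lam p \<longleftrightarrow> (\<forall>m\<in>Poly_Mapping.keys p. \<forall>i. Poly_Mapping.lookup m (Yv i) + Poly_Mapping.lookup m (Zv i) = lam i)"

definition lam2 :: "nat \<Rightarrow> nat \<Rightarrow> nat \<Rightarrow> nat" where
  "lam2 l1 l2 i = (if i = 1 then l1 else if i = 2 then l2 else 0)"

text \<open>Highest weight vector of a GL_d-submodule of G_d^2 isomorphic to W(l1,l2):
  nonzero element of G_d^2 of multidegree (l1,l2) killed by all D_{ij}, 1 \<le> i < j \<le> d.\<close>
definition hwv :: "nat \<Rightarrow> nat \<Rightarrow> nat \<Rightarrow> 'a::comm_ring_1 pol \<Rightarrow> bool" where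
  "hwv d l1 l2 p \<longleftrightarrow> p \<in> G2 d \<and> p \<noteq> 0 \<and> has_multideg (lam2 l1 l2) p
      \<and> (\<forall>i j. 1 \<le> i \<and> i < j \<and> j \<le> d \<longrightarrow> Dder i j p = 0)"

definition widx :: "nat \<Rightarrow> nat \<Rightarrow> nat set" where
  "widx l1 l2 = (if l2 = 0 then {1..l1 - 1} else {0..l1 - l2})"

definition wvec :: "nat \<Rightarrow> nat \<Rightarrow> nat \<Rightarrow> 'a::comm_ring_1 pol" where
  "wvec l1 l2 j = (if l2 = 0 then PVar (Yv 1) ^ j * PVar (Zv 1) ^ (l1 - j)
     else PVar (Yv 1) ^ j * (PVar (Yv 1) * PVar (Zv 2) - PVar (Yv 2) * PVar (Zv 1)) ^ l2
          * PVar (Zv 1) ^ (l1 - l2 - j))"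

end

theory Submission
  imports Defs
begin


abbreviation lk where "lk \<equiv> Poly_Mapping.lookup"

lemma mon_eq_plus:
  fixes m k q :: "var \<Rightarrow>\<^sub>0 nat"
  shows "(m = k + q) \<longleftrightarrow> ((\<forall>v. lk k v \<le> lk m v) \<and> q = m - k)"
proof
  assume "m = k + q" then show "(\<forall>v. lk k v \<le> lk m v) \<and> q = m - k"
    by (auto simp: lookup_add poly_mapping_eq_iff lookup_minus fun_eq_iff)
next
  assume "(\<forall>v. lk k v \<le> lk m v) \<and> q = m - k"
  then show "m = k + q"
    by (auto simp: lookup_add poly_mapping_eq_iff lookup_minus fun_eq_iff)
qed

lemma lookup_single_mult:
  fixes r :: "'a::comm_ring_1 pol"
  shows "lk (Poly_Mapping.single k c * r) m =
    (if (\<forall>v. lk k v \<le> lk m v) then c * lk r (m - k) else 0)"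
proof -
  have "lk (Poly_Mapping.single k c * r) m = (\<Sum>l. lk (Poly_Mapping.single k c) l * (\<Sum>q. lk r q when m = l + q))"
    by (rule lookup_mult)
  also have "\<dots> = (\<Sum>l. (c * (\<Sum>q. lk r q when m = k + q)) when l = k)"
    by (rule Sum_any.cong) (auto simp: lookup_single when_def)
  also have "\<dots> = c * (\<Sum>q. lk r q when m = k + q)" by simp
  also have "(\<Sum>q. lk r q when m = k + q) = (\<Sum>q. (lk r q when (\<forall>v. lk k v \<le> lk m v)) when q = m - k)"
    by (rule Sum_any.cong) (simp add: mon_eq_plus when_def)
  also have "\<dots> = (lk r (m - k) when (\<forall>v. lk k v \<le> lk m v))"
    by (rule Sum_any_when_equal)
  finally show ?thesis by (simp add: when_def)
qed

lemma lookup_PConst_mult: "lk (PConst c * (r::'a::comm_ring_1 pol)) m = c * lk r m"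
  by (simp add: PConst_def lookup_single_mult)

lemma PVar_pow: "(PVar v :: 'a::comm_ring_1 pol) ^ n = Poly_Mapping.single (Poly_Mapping.single v n) 1"
  by (induct n) (simp_all add: PVar_def mult_single single_add[symmetric])

lemma lookup_PVar_pow_mult: "lk ((PVar v :: 'a::comm_ring_1 pol) ^ n * r) m =
   (if n \<le> lk m v then lk r (m - Poly_Mapping.single v n) else 0)"
  unfolding PVar_pow lookup_single_mult
  by (auto simp: lookup_single when_def)

lemma lookup_PVar_mult: "lk ((PVar v :: 'a::comm_ring_1 pol) * r) m =
   (if 0 < lk m v then lk r (m - Poly_Mapping.single v 1) else 0)"
  using lookup_PVar_pow_mult[of v 1 r m] by simp

lemma sum_when_eq: "finite A \<Longrightarrow> (\<Sum>a\<in>A. (f a when a = b)) = ((f b when b \<in> A) :: 'b::comm_monoid_add)"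
  by (simp add: when_def)

lemma lookup_pderiv: "lk (pderiv_var v (r::'a::comm_ring_1 pol)) m =
   of_nat (lk m v + 1) * lk r (m + Poly_Mapping.single v 1)"
proof -
  have "lk (pderiv_var v r) m = (\<Sum>k\<in>Poly_Mapping.keys r. ((of_nat (lk k v) * lk r k) when k - Poly_Mapping.single v 1 = m))"
    unfolding pderiv_var_def lookup_sum by (simp add: lookup_single)
  also have "\<dots> = (\<Sum>k\<in>Poly_Mapping.keys r. ((of_nat (lk k v) * lk r k) when k = m + Poly_Mapping.single v 1))"
  proof (rule sum.cong[OF refl])
    fix k assume "k \<in> Poly_Mapping.keys r"
    show "((of_nat (lk k v) * lk r k) when k - Poly_Mapping.single v 1 = m) = ((of_nat (lk k v) * lk r k) when k = m + Poly_Mapping.single v 1)"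
    proof (cases "lk k v = 0")
      case True
      then have "k \<noteq> m + Poly_Mapping.single v 1" by (auto dest!: arg_cong[where f="\<lambda>p. lk p v"] simp: lookup_add)
      then show ?thesis using True by (simp add: when_def)
    next
      case False
      have "(k - Poly_Mapping.single v 1 = m) = (k = m + Poly_Mapping.single v 1)"
        using False by (auto simp: poly_mapping_eq_iff fun_eq_iff lookup_add lookup_minus lookup_single when_def)
      then show ?thesis by simp
    qed
  qed
  also have "\<dots> = (of_nat (lk m v + 1) * lk r (m + Poly_Mapping.single v 1))"
    by (subst sum_when_eq) (auto simp: when_def lookup_add in_keys_iff)
  finally show ?thesis .
qed

lemma pderiv_add: "pderiv_var v (p + q :: 'a::comm_ring_1 pol) = pderiv_var v p + pderiv_var v q"
  by (rule poly_mapping_eqI) (simp add: lookup_pderiv lookup_add algebra_simps)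
lemma pderiv_diff: "pderiv_var v (p - q :: 'a::comm_ring_1 pol) = pderiv_var v p - pderiv_var v q"
  by (rule poly_mapping_eqI) (simp add: lookup_pderiv lookup_minus algebra_simps)
lemma pderiv_zero: "pderiv_var v (0 :: 'a::comm_ring_1 pol) = 0"
  by (rule poly_mapping_eqI) (simp add: lookup_pderiv)
lemma pderiv_sum: "pderiv_var v (\<Sum>i\<in>I. f i :: 'a::comm_ring_1 pol) = (\<Sum>i\<in>I. pderiv_var v (f i))"
  by (induct I rule: infinite_finite_induct) (simp_all add: pderiv_zero pderiv_add)
lemma pderiv_PConst_mult: "pderiv_var v (PConst c * p :: 'a::comm_ring_1 pol) = PConst c * pderiv_var v p"
  by (rule poly_mapping_eqI) (simp add: lookup_pderiv lookup_PConst_mult mult.left_commute)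

lemma pderiv_single: "pderiv_var v (Poly_Mapping.single a c :: 'a::comm_ring_1 pol)
   = Poly_Mapping.single (a - Poly_Mapping.single v 1) (of_nat (lk a v) * c)"
proof (rule poly_mapping_eqI)
  fix m
  show "lk (pderiv_var v (Poly_Mapping.single a c :: 'a::comm_ring_1 pol)) m =
        lk (Poly_Mapping.single (a - Poly_Mapping.single v 1) (of_nat (lk a v) * c)) m"
  proof (cases "lk a v = 0")
    case True
    then have "a \<noteq> m + Poly_Mapping.single v 1" by (auto dest!: arg_cong[where f="\<lambda>p. lk p v"] simp: lookup_add)
    then show ?thesis using True by (simp add: lookup_pderiv lookup_single when_def)
  next
    case False
    have "(a - Poly_Mapping.single v 1 = m) = (a = m + Poly_Mapping.single v 1)"
      using False by (auto simp: poly_mapping_eq_iff fun_eq_iff lookup_add lookup_minus lookup_single when_def)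
    then show ?thesis using False by (auto simp: lookup_pderiv lookup_single when_def lookup_add)
  qed
qed

definition mle :: "(var \<Rightarrow>\<^sub>0 nat) \<Rightarrow> (var \<Rightarrow>\<^sub>0 nat) \<Rightarrow> bool" where
  "mle a m \<longleftrightarrow> (\<forall>w. lk a w \<le> lk m w)"

lemma pderiv_single_mult: "pderiv_var v (Poly_Mapping.single a c * q :: 'a::comm_ring_1 pol)
   = pderiv_var v (Poly_Mapping.single a c) * q + Poly_Mapping.single a c * pderiv_var v q"
proof (rule poly_mapping_eqI)
  fix m
  let ?e = "Poly_Mapping.single v (1::nat)"
  have L: "lk (pderiv_var v (Poly_Mapping.single a c * q)) m = of_nat (lk m v + 1) * (if mle a (m + ?e) then c * lk q (m + ?e - a) else 0)"
    by (simp add: lookup_pderiv lookup_single_mult mle_def)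
  have R: "lk (pderiv_var v (Poly_Mapping.single a c) * q + Poly_Mapping.single a c * pderiv_var v q) m
     = (if mle (a - ?e) m then of_nat (lk a v) * c * lk q (m - (a - ?e)) else 0)
       + (if mle a m then c * (of_nat (lk (m - a) v + 1) * lk q (m - a + ?e)) else 0)"
    by (simp add: lookup_add pderiv_single lookup_single_mult lookup_pderiv mle_def)
  show "lk (pderiv_var v (Poly_Mapping.single a c * q)) m =
         lk (pderiv_var v (Poly_Mapping.single a c) * q + Poly_Mapping.single a c * pderiv_var v q) m"
  proof (cases "mle a m")
    case True
    have h1a: "mle a (m + ?e)" using True by (simp add: mle_def lookup_add) (meson le_add1 le_trans)
    have h1b: "mle (a - ?e) m" using True by (simp add: mle_def lookup_minus) (meson diff_le_self le_trans)
    have h1c: "m + ?e - a = m - a + ?e" using True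
      by (auto simp: mle_def lookup_add lookup_minus poly_mapping_eq_iff fun_eq_iff)
    note h1 = h1a h1b h1c
    have h2: "lk a v > 0 \<Longrightarrow> m - (a - ?e) = m + ?e - a"
      using True by (auto simp: mle_def lookup_add lookup_minus poly_mapping_eq_iff fun_eq_iff lookup_single when_def)
    have av: "lk a v \<le> lk m v" using True by (simp add: mle_def)
    have h3: "lk (m - a) v + 1 = lk m v + 1 - lk a v" using av by (simp add: lookup_minus)
    have "(of_nat (lk m v + 1) :: 'a) = of_nat (lk a v) + of_nat (lk (m - a) v + 1)"
      unfolding h3 of_nat_add[symmetric] using av by simp
    then show ?thesis unfolding L R using True h1 h2
      by (cases "lk a v = 0") (simp_all add: algebra_simps)
  next
    case False
    show ?thesis
    proof (cases "mle a (m + ?e)")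
      case True
      have T': "lk a w \<le> lk m w + (if v = w then 1 else 0)" for w
        using True[unfolded mle_def, rule_format, of w] by (cases "v = w") (simp_all add: lookup_add lookup_single when_def)
      have av: "lk a v = lk m v + 1"
      proof -
        have "lk a v \<le> lk m v + 1" using T'[of v] by simp
        moreover have "\<not> lk a v \<le> lk m v"
        proof
          assume av': "lk a v \<le> lk m v"
          have "mle a m" unfolding mle_def
          proof
            fix w show "lk a w \<le> lk m w" using T'[of w] av' by (cases "v = w") auto
          qed
          then show False using False by simp
        qed
        ultimately show ?thesis by simp
      qed
      have h1a: "mle (a - ?e) m"
        unfolding mle_def
      proof
        fix w show "lk (a - ?e) w \<le> lk m w"
          using T'[of w] av by (cases "v = w") (auto simp: lookup_minus lookup_single)
      qed
      have h1b: "m - (a - ?e) = m + ?e - a"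
      proof (rule poly_mapping_eqI)
        fix w show "lk (m - (a - ?e)) w = lk (m + ?e - a) w"
          using T'[of w] av by (cases "v = w") (auto simp: lookup_minus lookup_add lookup_single)
      qed
      note h1 = h1a h1b
      show ?thesis unfolding L R h1b using True False h1a av by (simp add: mult.assoc)
    next
      case False2: False
      have "\<not> mle (a - ?e) m"
      proof
        assume "mle (a - ?e) m"
        then have "mle a (m + ?e)" unfolding mle_def
        proof (intro allI)
          fix w assume H: "\<forall>w. lk (a - ?e) w \<le> lk m w"
          show "lk a w \<le> lk (m + ?e) w"
            using H[rule_format, of w] by (cases "v = w") (auto simp: lookup_minus lookup_add lookup_single)
        qed
        then show False using False2 by simp
      qed
      then show ?thesis unfolding L R using False False2 by simp
    qed
  qed
qed

lemma pm_expand: "(p::'a::comm_ring_1 pol) = (\<Sum>a\<in>Poly_Mapping.keys p. Poly_Mapping.single a (lk p a))"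
  by (rule poly_mapping_eqI) (auto simp: lookup_sum lookup_single sum_when_eq in_keys_iff when_def)

lemma pderiv_mult: "pderiv_var v (p * q :: 'a::comm_ring_1 pol) = pderiv_var v p * q + p * pderiv_var v q"
proof -
  have "pderiv_var v (p * q) = pderiv_var v ((\<Sum>a\<in>Poly_Mapping.keys p. Poly_Mapping.single a (lk p a)) * q)"
    by (subst pm_expand[of p]) simp
  also have "\<dots> = (\<Sum>a\<in>Poly_Mapping.keys p. pderiv_var v (Poly_Mapping.single a (lk p a)) * q + Poly_Mapping.single a (lk p a) * pderiv_var v q)"
    by (simp add: sum_distrib_right pderiv_sum pderiv_single_mult)
  also have "\<dots> = pderiv_var v (\<Sum>a\<in>Poly_Mapping.keys p. Poly_Mapping.single a (lk p a)) * q + (\<Sum>a\<in>Poly_Mapping.keys p. Poly_Mapping.single a (lk p a)) * pderiv_var v q"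
    by (simp add: sum.distrib sum_distrib_right pderiv_sum)
  also have "\<dots> = pderiv_var v p * q + p * pderiv_var v q"
    by (simp flip: pm_expand)
  finally show ?thesis .
qed

lemma Dder_add: "Dder i j (p + q :: 'a::comm_ring_1 pol) = Dder i j p + Dder i j q"
  by (simp add: Dder_def pderiv_add algebra_simps)
lemma Dder_diff: "Dder i j (p - q :: 'a::comm_ring_1 pol) = Dder i j p - Dder i j q"
  by (simp add: Dder_def pderiv_diff algebra_simps)
lemma Dder_zero: "Dder i j (0 :: 'a::comm_ring_1 pol) = 0"
  by (simp add: Dder_def pderiv_zero)
lemma Dder_sum: "Dder i j (\<Sum>k\<in>I. f k :: 'a::comm_ring_1 pol) = (\<Sum>k\<in>I. Dder i j (f k))"
  by (induct I rule: infinite_finite_induct) (simp_all add: Dder_zero Dder_add)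
lemma Dder_PConst_mult: "Dder i j (PConst c * p :: 'a::comm_ring_1 pol) = PConst c * Dder i j p"
  unfolding Dder_def pderiv_PConst_mult by (simp add: distrib_left mult.left_commute)
lemma Dder_mult: "Dder i j (p * q :: 'a::comm_ring_1 pol) = Dder i j p * q + p * Dder i j q"
  by (simp add: Dder_def pderiv_mult algebra_simps)
lemma Dder_mult0: "Dder i j p = 0 \<Longrightarrow> Dder i j q = 0 \<Longrightarrow> Dder i j (p * q :: 'a::comm_ring_1 pol) = 0"
  by (simp add: Dder_mult)
lemma pderiv_one: "pderiv_var v (1 :: 'a::comm_ring_1 pol) = 0"
  using pderiv_single[of v 0 "1::'a"] by simp
lemma Dder_one: "Dder i j (1 :: 'a::comm_ring_1 pol) = 0"
  by (simp add: Dder_def pderiv_one)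
lemma Dder_pow0: "Dder i j p = 0 \<Longrightarrow> Dder i j (p ^ n :: 'a::comm_ring_1 pol) = 0"
  by (induct n) (simp_all add: Dder_one Dder_mult0)

lemma pderiv_PVar: "pderiv_var v (PVar u :: 'a::comm_ring_1 pol) = (if u = v then 1 else 0)"
  by (simp add: PVar_def pderiv_single lookup_single when_def)

lemma Dder_Y1: "2 \<le> j \<Longrightarrow> Dder i j (PVar (Yv 1) :: 'a::comm_ring_1 pol) = 0"
  by (simp add: Dder_def pderiv_PVar)
lemma Dder_Z1: "2 \<le> j \<Longrightarrow> Dder i j (PVar (Zv 1) :: 'a::comm_ring_1 pol) = 0"
  by (simp add: Dder_def pderiv_PVar)

definition Dl :: "'a::comm_ring_1 pol" where
  "Dl = PVar (Yv 1) * PVar (Zv 2) - PVar (Yv 2) * PVar (Zv 1)"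

lemma Dder_Dl: assumes "1 \<le> i" "i < j" shows "Dder i j (Dl :: 'a::comm_ring_1 pol) = 0"
proof (cases "j = 2")
  case True
  then have "i = 1" using assms by simp
  then show ?thesis using True by (simp add: Dl_def Dder_diff Dder_mult Dder_Y1 Dder_Z1, simp add: Dder_def pderiv_PVar)
next
  case False
  then show ?thesis using assms by (simp add: Dl_def Dder_diff Dder_mult Dder_Y1 Dder_Z1, simp add: Dder_def pderiv_PVar)
qed

definition W :: "nat \<Rightarrow> nat \<Rightarrow> nat \<Rightarrow> 'a::comm_ring_1 pol" where
  "W l1 l2 j = PVar (Yv 1) ^ j * Dl ^ l2 * PVar (Zv 1) ^ (l1 - l2 - j)"

lemma wvec_W: "wvec l1 l2 j = W l1 l2 j"
  by (simp add: wvec_def W_def Dl_def)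

lemma Dder_W: "1 \<le> i \<Longrightarrow> i < j \<Longrightarrow> Dder i j (W l1 l2 k :: 'a::comm_ring_1 pol) = 0"
  unfolding W_def
  by (intro Dder_mult0 Dder_pow0 Dder_Dl Dder_Y1 Dder_Z1) auto

definition allk :: "((var \<Rightarrow>\<^sub>0 nat) \<Rightarrow> bool) \<Rightarrow> 'a::comm_ring_1 pol \<Rightarrow> bool" where
  "allk P p \<longleftrightarrow> (\<forall>m\<in>Poly_Mapping.keys p. P m)"

lemma allk_mult: "allk P p \<Longrightarrow> allk Q q \<Longrightarrow> (\<And>a b. P a \<Longrightarrow> Q b \<Longrightarrow> R (a + b)) \<Longrightarrow> allk R (p * q)"
  unfolding allk_def using keys_mult[of p q] by blast

lemma allk_mult_same: "allk P p \<Longrightarrow> allk P q \<Longrightarrow> (\<And>a b. P a \<Longrightarrow> P b \<Longrightarrow> P (a + b)) \<Longrightarrow> allk P (p * q)"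
  by (rule allk_mult)

lemma allk_mono: "allk P p \<Longrightarrow> (\<And>m. P m \<Longrightarrow> Q m) \<Longrightarrow> allk Q p"
  by (auto simp: allk_def)

lemma allk_add: "allk P p \<Longrightarrow> allk P q \<Longrightarrow> allk P (p + q)"
  unfolding allk_def using keys_add[of p q] by blast

lemma allk_diff: "allk P p \<Longrightarrow> allk P q \<Longrightarrow> allk P (p - q)"
  unfolding allk_def by (auto simp: in_keys_iff lookup_minus) 

lemma allk_one: "P 0 \<Longrightarrow> allk P 1"
  by (simp add: allk_def)

lemma allk_PVar: "P (Poly_Mapping.single v 1) \<Longrightarrow> allk P (PVar v)"
  by (simp add: allk_def PVar_def)

lemma allk_PVar2: "allk (\<lambda>m. m = Poly_Mapping.single u 1 + Poly_Mapping.single v 1) (PVar u * PVar v)"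
  by (rule allk_mult[of "\<lambda>m. m = Poly_Mapping.single u 1" _ "\<lambda>m. m = Poly_Mapping.single v 1"])
     (auto intro: allk_PVar)

lemma allk_mult_left: "allk P p \<Longrightarrow> (\<And>a b. P a \<Longrightarrow> P (a + b)) \<Longrightarrow> allk P (p * q)"
  by (rule allk_mult[of P p "\<lambda>_. True"]) (auto simp: allk_def)

lemma allk_mult_right: "allk P q \<Longrightarrow> (\<And>a b. P b \<Longrightarrow> P (a + b)) \<Longrightarrow> allk P (p * q)"
  by (rule allk_mult[of "\<lambda>_. True" p P]) (auto simp: allk_def)

lemma allk_pow: "allk P p \<Longrightarrow> P 0 \<Longrightarrow> (\<And>a b. P a \<Longrightarrow> P b \<Longrightarrow> P (a + b)) \<Longrightarrow> allk P (p ^ n)"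
  by (induct n) (auto intro: allk_one allk_mult)

lemma md_add: assumes "\<forall>i. lk a (Yv i) + lk a (Zv i) = (lam i::nat)" "\<forall>i. lk b (Yv i) + lk b (Zv i) = mu i"
  shows "\<forall>i. lk (a+b) (Yv i) + lk (a+b) (Zv i) = lam i + mu i"
proof
  fix i
  have "lk a (Yv i) + lk a (Zv i) = lam i" "lk b (Yv i) + lk b (Zv i) = mu i" using assms by auto
  then show "lk (a+b) (Yv i) + lk (a+b) (Zv i) = lam i + mu i" by (simp add: lookup_add)
qed

lemma allk_pow_lam: "allk (\<lambda>m. \<forall>i. lk m (Yv i) + lk m (Zv i) = lam i) p
   \<Longrightarrow> allk (\<lambda>m. \<forall>i. lk m (Yv i) + lk m (Zv i) = n * lam i) (p ^ n)"
proof (induct n)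
  case 0 show ?case by (simp add: allk_def)
next
  case (Suc n)
  show ?case unfolding power_Suc
    by (rule allk_mult[OF Suc(2) Suc(1)[OF Suc(2)]]) (drule (1) md_add, simp)
qed

lemma has_multideg_allk: "has_multideg lam p = allk (\<lambda>m. \<forall>i. lk m (Yv i) + lk m (Zv i) = lam i) p"
  by (simp add: has_multideg_def allk_def)

lemma allk_md_mult:
  assumes "allk (\<lambda>m. \<forall>i. lk m (Yv i) + lk m (Zv i) = lam i) p" "allk (\<lambda>m. \<forall>i. lk m (Yv i) + lk m (Zv i) = mu i) q"
  shows "allk (\<lambda>m. \<forall>i. lk m (Yv i) + lk m (Zv i) = lam i + mu i) (p * q)"
  apply (rule allk_mult[OF assms])
  by (rule md_add)

lemma allk_md_PVar: "allk (\<lambda>m. \<forall>i. lk m (Yv i) + lk m (Zv i) = (if i = vidx v then 1 else 0)) (PVar v)"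
  by (rule allk_PVar) (cases v; simp add: lookup_single when_def)

lemma W_multideg:
  assumes "j \<le> l1 - l2" "l2 \<le> l1"
  shows "has_multideg (lam2 l1 l2) (W l1 l2 j :: 'a::comm_ring_1 pol)"
proof -
  let ?P = "\<lambda>lam (m::var \<Rightarrow>\<^sub>0 nat). \<forall>i. lk m (Yv i) + lk m (Zv i) = lam i"
  let ?e12 = "\<lambda>i::nat. (if i = 1 then 1 else 0) + (if i = 2 then 1 else (0::nat))"
  have a: "allk (?P ?e12) (PVar (Yv 1) * PVar (Zv 2) :: 'a pol)"
    using allk_md_mult[OF allk_md_PVar allk_md_PVar, of "Yv 1" "Zv 2"] by simp
  have b0: "allk (?P (\<lambda>i. (if i = 2 then 1 else 0) + (if i = 1 then 1 else (0::nat)))) (PVar (Yv 2) * PVar (Zv 1) :: 'a pol)"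
    using allk_md_mult[OF allk_md_PVar allk_md_PVar, of "Yv 2" "Zv 1"] by simp
  have b: "allk (?P ?e12) (PVar (Yv 2) * PVar (Zv 1) :: 'a pol)"
    using b0 by (simp add: add.commute)
  have dl: "allk (?P ?e12) (Dl :: 'a pol)" unfolding Dl_def by (rule allk_diff[OF a b])
  have "allk (?P (\<lambda>i. j * (if i = vidx (Yv 1) then 1 else 0) + l2 * ?e12 i + (l1 - l2 - j) * (if i = vidx (Zv 1) then 1 else 0))) (W l1 l2 j :: 'a pol)"
    unfolding W_def
    by (rule allk_md_mult[OF allk_md_mult[OF allk_pow_lam[OF allk_md_PVar] allk_pow_lam[OF dl]] allk_pow_lam[OF allk_md_PVar]])
  moreover have E: "j * (if i = vidx (Yv 1) then 1 else 0) + l2 * ?e12 i + (l1 - l2 - j) * (if i = vidx (Zv 1) then 1 else 0) = lam2 l1 l2 i" for i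
    using assms by (auto simp: lam2_def)
  ultimately show ?thesis unfolding has_multideg_allk E by blast
qed

lemma W_G2:
  assumes "2 \<le> d" "j \<le> l1 - l2" "0 < l2 \<or> (0 < j \<and> j < l1)"
  shows "W l1 l2 j \<in> (G2 d :: 'a::comm_ring_1 pol set)"
proof -
  let ?R = "\<lambda>m::var \<Rightarrow>\<^sub>0 nat. \<forall>v. 0 < lk m v \<longrightarrow> vidx v \<in> {1..d}"
  let ?Y = "\<lambda>m::var \<Rightarrow>\<^sub>0 nat. \<exists>i. 0 < lk m (Yv i)"
  let ?Z = "\<lambda>m::var \<Rightarrow>\<^sub>0 nat. \<exists>i. 0 < lk m (Zv i)"
  have Radd: "?R a \<Longrightarrow> ?R b \<Longrightarrow> ?R (a + b)" for a b by (auto simp: lookup_add)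
  have Rv: "vidx v \<in> {1..d} \<Longrightarrow> allk ?R (PVar v :: 'a pol)" for v
    by (rule allk_PVar) (auto simp: lookup_single when_def)
  have R0: "?R 0" by simp
  have Ry1: "allk ?R (PVar (Yv 1) :: 'a pol)" by (rule Rv) (use assms(1) in simp)
  have Rz1: "allk ?R (PVar (Zv 1) :: 'a pol)" by (rule Rv) (use assms(1) in simp)
  have Ry2: "allk ?R (PVar (Yv 2) :: 'a pol)" by (rule Rv) (use assms(1) in simp)
  have Rz2: "allk ?R (PVar (Zv 2) :: 'a pol)" by (rule Rv) (use assms(1) in simp)
  have Rdl: "allk ?R (Dl :: 'a pol)" unfolding Dl_def using assms(1)
    by (intro allk_diff allk_mult_same[OF Ry1 Rz2 Radd] allk_mult_same[OF Ry2 Rz1 Radd])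
  have RW: "allk ?R (W l1 l2 j :: 'a pol)" unfolding W_def using assms(1)
    by (intro allk_mult_same[OF allk_mult_same[OF allk_pow[OF Ry1 R0 Radd] allk_pow[OF Rdl R0 Radd] Radd] allk_pow[OF Rz1 R0 Radd] Radd])
  have YZdl: "allk (\<lambda>m. ?Y m \<and> ?Z m) (Dl :: 'a pol)" unfolding Dl_def
    by (intro allk_diff allk_mono[OF allk_PVar2]) (auto simp: lookup_add lookup_single when_def)
  have YZW: "allk (\<lambda>m. ?Y m \<and> ?Z m) (W l1 l2 j :: 'a pol)"
  proof (cases "0 < l2")
    case True
    then obtain k where k: "l2 = Suc k" by (cases l2) auto
    have "allk (\<lambda>m. ?Y m \<and> ?Z m) (Dl ^ l2 :: 'a pol)" unfolding k power_Suc
      by (rule allk_mult_left[OF YZdl]) (auto simp: lookup_add)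
    then show ?thesis unfolding W_def
      by (intro allk_mult_left allk_mult_right) (auto simp: lookup_add)
  next
    case False
    then have j: "0 < j" "j < l1" using assms(3) by auto
    obtain a where a: "j = Suc a" using j by (cases j) auto
    obtain b where b: "l1 - l2 - j = Suc b" using j False by (cases "l1 - l2 - j") auto
    have y: "allk ?Y (PVar (Yv 1) ^ j :: 'a pol)" unfolding a power_Suc
      by (rule allk_mult_left[OF allk_PVar]) (auto simp: lookup_add lookup_single when_def)
    have z: "allk ?Z (PVar (Zv 1) ^ (l1 - l2 - j) :: 'a pol)" unfolding b power_Suc
      by (rule allk_mult_left[OF allk_PVar]) (auto simp: lookup_add lookup_single when_def)
    have yz: "allk (\<lambda>m. ?Y m \<and> ?Z m) (PVar (Yv 1) ^ j * Dl ^ l2 * PVar (Zv 1) ^ (l1 - l2 - j) :: 'a pol)"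
      by (rule allk_mult[OF allk_mult_left[OF y] z]) (auto simp: lookup_add)
    then show ?thesis unfolding W_def .
  qed
  show ?thesis using RW YZW by (auto simp: G2_def allk_def)
qed




definition M :: "nat \<Rightarrow> nat \<Rightarrow> nat \<Rightarrow> nat \<Rightarrow> (var \<Rightarrow>\<^sub>0 nat)" where
  "M a e1 b e2 = Poly_Mapping.single (Yv 1) a + Poly_Mapping.single (Zv 1) e1
     + Poly_Mapping.single (Yv 2) b + Poly_Mapping.single (Zv 2) e2"

lemma lk_M_Y [simp]: "lk (M a e1 b e2) (Yv i) = (if i = 1 then a else if i = 2 then b else 0)"
  by (simp add: M_def lookup_add lookup_single when_def)
lemma lk_M_Z [simp]: "lk (M a e1 b e2) (Zv i) = (if i = 1 then e1 else if i = 2 then e2 else 0)"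
  by (simp add: M_def lookup_add lookup_single when_def)

lemma pm_eq_var: "((m::var \<Rightarrow>\<^sub>0 nat) = m') \<longleftrightarrow> (\<forall>i. lk m (Yv i) = lk m' (Yv i) \<and> lk m (Zv i) = lk m' (Zv i))"
proof
  assume H: "\<forall>i. lk m (Yv i) = lk m' (Yv i) \<and> lk m (Zv i) = lk m' (Zv i)"
  show "m = m'"
  proof (rule poly_mapping_eqI)
    fix v show "lk m v = lk m' v" using H by (cases v) auto
  qed
qed simp

lemma M_eq_zero: "(M a e1 b e2 = 0) \<longleftrightarrow> a = 0 \<and> e1 = 0 \<and> b = 0 \<and> e2 = 0"
proof
  assume H: "M a e1 b e2 = 0"
  have "lk (M a e1 b e2) (Yv 1) = 0" "lk (M a e1 b e2) (Zv 1) = 0" "lk (M a e1 b e2) (Yv 2) = 0" "lk (M a e1 b e2) (Zv 2) = 0"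
    unfolding H by simp_all
  then show "a = 0 \<and> e1 = 0 \<and> b = 0 \<and> e2 = 0" by simp
qed (simp add: M_def)

lemma lk_Dl_mult:
  assumes "lk m (Zv 2) = 0"
  shows "lk (Dl * r :: 'a::comm_ring_1 pol) m = (if 0 < lk m (Yv 2) \<and> 0 < lk m (Zv 1)
     then - lk r (m - Poly_Mapping.single (Yv 2) 1 - Poly_Mapping.single (Zv 1) 1) else 0)"
proof -
  have "Dl * r = PVar (Yv 1) * (PVar (Zv 2) * r) - PVar (Yv 2) * (PVar (Zv 1) * r)"
    by (simp add: Dl_def algebra_simps)
  then show ?thesis using assms
    by (simp add: lookup_minus lookup_PVar_mult lookup_single when_def)
qed

lemma lk_Dlpow_mult:
  assumes "lk m (Zv 2) = 0"
  shows "lk (Dl ^ k * r :: 'a::comm_ring_1 pol) m = (if k \<le> lk m (Yv 2) \<and> k \<le> lk m (Zv 1)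
     then (-1) ^ k * lk r (m - Poly_Mapping.single (Yv 2) k - Poly_Mapping.single (Zv 1) k) else 0)"
  using assms
proof (induct k arbitrary: m)
  case 0 then show ?case by simp
next
  case (Suc k)
  let ?m' = "m - Poly_Mapping.single (Yv 2) 1 - Poly_Mapping.single (Zv 1) 1"
  have z: "lk ?m' (Zv 2) = 0" using Suc(2) by (simp add: lookup_minus lookup_single)
  have eq: "?m' - Poly_Mapping.single (Yv 2) k - Poly_Mapping.single (Zv 1) k
      = m - Poly_Mapping.single (Yv 2) (Suc k) - Poly_Mapping.single (Zv 1) (Suc k)"
    unfolding pm_eq_var by (simp add: lookup_minus lookup_single when_def)
  have hy: "lk ?m' (Yv 2) = lk m (Yv 2) - 1" and hz: "lk ?m' (Zv 1) = lk m (Zv 1) - 1"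
    by (simp_all add: lookup_minus lookup_single)
  have "lk (Dl ^ Suc k * r) m = lk (Dl * (Dl ^ k * r)) m" by (simp add: mult.assoc)
  also have "\<dots> = (if 0 < lk m (Yv 2) \<and> 0 < lk m (Zv 1) then - lk (Dl ^ k * r) ?m' else 0)"
    by (rule lk_Dl_mult[OF Suc(2)])
  also have "\<dots> = (if Suc k \<le> lk m (Yv 2) \<and> Suc k \<le> lk m (Zv 1)
     then (-1) ^ Suc k * lk r (m - Poly_Mapping.single (Yv 2) (Suc k) - Poly_Mapping.single (Zv 1) (Suc k)) else 0)"
  proof (cases "0 < lk m (Yv 2) \<and> 0 < lk m (Zv 1)")
    case True
    have c: "(k \<le> lk m (Yv 2) - 1 \<and> k \<le> lk m (Zv 1) - 1) = (Suc k \<le> lk m (Yv 2) \<and> Suc k \<le> lk m (Zv 1))"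
      using True by auto
    show ?thesis unfolding Suc(1)[OF z] hy hz eq c using True by simp
  next
    case False
    then show ?thesis by auto
  qed
  finally show ?case .
qed

lemma lk_W:
  assumes "j \<le> l1 - l2" "l2 \<le> l1"
  shows "lk (W l1 l2 j :: 'a::comm_ring_1 pol) (M a e1 l2 0) = (if a = j \<and> e1 = l1 - j then (-1) ^ l2 else 0)"
proof -
  let ?e = "l1 - l2 - j"
  have W: "W l1 l2 j = Dl ^ l2 * (PVar (Yv 1) ^ j * PVar (Zv 1) ^ ?e :: 'a pol)"
    by (simp add: W_def algebra_simps)
  have key: "(M a e1 l2 0 - Poly_Mapping.single (Yv 2) l2 - Poly_Mapping.single (Zv 1) l2 - Poly_Mapping.single (Yv 1) j
       = Poly_Mapping.single (Zv 1) ?e) \<longleftrightarrow> (a - j = 0 \<and> e1 - l2 = ?e)"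
    unfolding pm_eq_var by (auto simp: lookup_minus lookup_single when_def)
  have lp: "lk (PVar (Zv 1) ^ ?e :: 'a pol) m = (if m = Poly_Mapping.single (Zv 1) ?e then 1 else 0)" for m
    by (simp add: PVar_pow lookup_single when_def eq_commute)
  have s1: "lk (W l1 l2 j) (M a e1 l2 0) = (if l2 \<le> e1 then (-1) ^ l2 * lk (PVar (Yv 1) ^ j * PVar (Zv 1) ^ ?e :: 'a pol)
      (M a e1 l2 0 - Poly_Mapping.single (Yv 2) l2 - Poly_Mapping.single (Zv 1) l2) else 0)"
    unfolding W by (subst lk_Dlpow_mult) simp_all
  have s2: "lk (PVar (Yv 1) ^ j * PVar (Zv 1) ^ ?e :: 'a pol)
      (M a e1 l2 0 - Poly_Mapping.single (Yv 2) l2 - Poly_Mapping.single (Zv 1) l2)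
    = (if j \<le> a \<and> a - j = 0 \<and> e1 - l2 = ?e then 1 else 0)"
    unfolding lookup_PVar_pow_mult lp key by (simp add: lookup_minus lookup_single)
  have c: "(l2 \<le> e1 \<and> (j \<le> a \<and> a - j = 0 \<and> e1 - l2 = ?e)) = (a = j \<and> e1 = l1 - j)"
    using assms by auto
  show ?thesis
  proof (cases "a = j \<and> e1 = l1 - j")
    case True
    then have T1: "l2 \<le> e1" and T2: "j \<le> a \<and> a - j = 0 \<and> e1 - l2 = ?e" using assms by auto
    show ?thesis unfolding s1 s2 if_P[OF T1] if_P[OF T2] if_P[OF True] by (rule mult_1_right)
  next
    case False
    then have H: "\<not> (l2 \<le> e1 \<and> (j \<le> a \<and> a - j = 0 \<and> e1 - l2 = ?e))" using c by blast
    have F: "\<not> (a = j \<and> e1 = l1 - j)" using False .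
    show ?thesis unfolding s1 s2 if_not_P[OF F]
    proof (cases "l2 \<le> e1")
      case True
      then have "\<not> (j \<le> a \<and> a - j = 0 \<and> e1 - l2 = ?e)" using H by blast
      then show "(if l2 \<le> e1 then (-1) ^ l2 * (if j \<le> a \<and> a - j = 0 \<and> e1 - l2 = ?e then 1 else 0) else 0) = (0::'a)"
        using True by (simp only: if_True if_False mult_zero_right)
    next
      case False
      then show "(if l2 \<le> e1 then (-1) ^ l2 * (if j \<le> a \<and> a - j = 0 \<and> e1 - l2 = ?e then 1 else 0) else 0) = (0::'a)"
        by (simp only: if_False)
    qed
  qed
qed




lemma lk_Dder12: "lk (Dder 1 2 (r :: 'a::comm_ring_1 pol)) (M a e1 b e2) =
   (if 0 < a then of_nat (b + 1) * lk r (M (a - 1) e1 (b + 1) e2) else 0)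
 + (if 0 < e1 then of_nat (e2 + 1) * lk r (M a (e1 - 1) b (e2 + 1)) else 0)"
proof -
  have m1: "M a e1 b e2 - Poly_Mapping.single (Yv 1) 1 + Poly_Mapping.single (Yv 2) 1 = M (a - 1) e1 (b + 1) e2" if "0 < a"
    unfolding pm_eq_var using that by (simp add: lookup_add lookup_minus lookup_single when_def)
  have m2: "M a e1 b e2 - Poly_Mapping.single (Zv 1) 1 + Poly_Mapping.single (Zv 2) 1 = M a (e1 - 1) b (e2 + 1)" if "0 < e1"
    unfolding pm_eq_var using that by (simp add: lookup_add lookup_minus lookup_single when_def)
  have l1: "lk (M a e1 b e2 - Poly_Mapping.single (Yv 1) 1) (Yv 2) = b"
    by (simp add: lookup_minus lookup_single)
  have l2: "lk (M a e1 b e2 - Poly_Mapping.single (Zv 1) 1) (Zv 2) = e2"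
    by (simp add: lookup_minus lookup_single)
  have ya: "lk (M a e1 b e2) (Yv 1) = a" and ze: "lk (M a e1 b e2) (Zv 1) = e1" by simp_all
  have A: "lk (PVar (Yv 1) * pderiv_var (Yv 2) r) (M a e1 b e2) =
     (if 0 < a then of_nat (b + 1) * lk r (M (a - 1) e1 (b + 1) e2) else 0)"
  proof (cases "0 < a")
    case True
    show ?thesis unfolding lookup_PVar_mult ya if_P[OF True] lookup_pderiv l1 m1[OF True] by (rule refl)
  next
    case False
    show ?thesis unfolding lookup_PVar_mult lk_M_Y using False by simp
  qed
  have B: "lk (PVar (Zv 1) * pderiv_var (Zv 2) r) (M a e1 b e2) =
     (if 0 < e1 then of_nat (e2 + 1) * lk r (M a (e1 - 1) b (e2 + 1)) else 0)"
  proof (cases "0 < e1")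
    case True
    show ?thesis unfolding lookup_PVar_mult ze if_P[OF True] lookup_pderiv l2 m2[OF True] by (rule refl)
  next
    case False
    show ?thesis unfolding lookup_PVar_mult lk_M_Z using False by simp
  qed
  show ?thesis unfolding Dder_def lookup_add A B ..
qed

lemma nz_Suc: "(1 + of_nat n :: 'a::field_char_0) \<noteq> 0"
  by (metis of_nat_Suc of_nat_neq_0)

lemma kernel_below:
  fixes r :: "'a::field_char_0 pol"
  assumes K: "\<And>a e1 b e2. lk (Dder 1 2 r) (M a e1 b e2) = 0"
  shows "e1 < b \<Longrightarrow> lk r (M a e1 b e2) = 0"
proof (induct e1 arbitrary: a b e2)
  case 0
  then obtain b' where b: "b = Suc b'" by (cases b) auto
  have "of_nat (b' + 1) * lk r (M a 0 (b' + 1) e2) = (0::'a)"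
    using K[of "Suc a" 0 b' e2] unfolding lk_Dder12 by simp
  then show ?case using b nz_Suc[of b', where 'a='a] by simp
next
  case (Suc e1)
  then obtain b' where b: "b = Suc b'" and b': "e1 < b'" by (cases b) auto
  have "lk r (M (Suc a) e1 b' (e2 + 1)) = 0" using Suc(1)[OF b'] .
  then have "of_nat (b' + 1) * lk r (M a (Suc e1) (b' + 1) e2) = (0::'a)"
    using K[of "Suc a" "Suc e1" b' e2] unfolding lk_Dder12 by simp
  then show ?case using b nz_Suc[of b', where 'a='a] by simp
qed

lemma kernel_top:
  fixes r :: "'a::field_char_0 pol"
  assumes K: "\<And>a e1 b e2. lk (Dder 1 2 r) (M a e1 b e2) = 0"
    and base: "\<And>a e1. lk r (M a e1 l2 0) = 0"
  shows "k \<le> l2 \<Longrightarrow> lk r (M a e1 (l2 - k) k) = 0"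
proof (induct k arbitrary: a e1)
  case 0 then show ?case using base by simp
next
  case (Suc k)
  have b: "l2 - k = l2 - Suc k + 1" using Suc(2) by simp
  have "(if 0 < a then of_nat (l2 - Suc k + 1) * lk r (M (a - 1) (Suc e1) (l2 - Suc k + 1) k) else 0) = (0::'a)"
    using Suc(1)[of "a - 1" "Suc e1"] Suc(2) b by auto
  then have "of_nat (k + 1) * lk r (M a e1 (l2 - Suc k) (k + 1)) = (0::'a)"
    using K[of a "Suc e1" "l2 - Suc k" k] unfolding lk_Dder12 by simp
  then show ?case using nz_Suc[of k, where 'a='a] by simp
qed

lemma zero_from_coeffs:
  fixes r :: "'a::comm_ring_1 pol"
  assumes md: "has_multideg (lam2 l1 l2) r"
    and Z: "\<And>a e1 b e2. a + e1 = l1 \<Longrightarrow> b + e2 = l2 \<Longrightarrow> lk r (M a e1 b e2) = 0"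
  shows "r = 0"
proof (rule ccontr)
  assume "r \<noteq> 0"
  then obtain m where m: "m \<in> Poly_Mapping.keys r" by (metis keys_eq_empty ex_in_conv)
  have S: "lk m (Yv i) + lk m (Zv i) = lam2 l1 l2 i" for i using md m by (auto simp: has_multideg_def)
  have "m = M (lk m (Yv 1)) (lk m (Zv 1)) (lk m (Yv 2)) (lk m (Zv 2))"
    unfolding pm_eq_var
  proof
    fix i show "lk m (Yv i) = lk (M (lk m (Yv 1)) (lk m (Zv 1)) (lk m (Yv 2)) (lk m (Zv 2))) (Yv i) \<and>
          lk m (Zv i) = lk (M (lk m (Yv 1)) (lk m (Zv 1)) (lk m (Yv 2)) (lk m (Zv 2))) (Zv i)"
      using S[of i] by (auto simp: lam2_def)
  qed
  moreover have "lk r (M (lk m (Yv 1)) (lk m (Zv 1)) (lk m (Yv 2)) (lk m (Zv 2))) = 0"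
    using Z S[of 1] S[of 2] by (simp add: lam2_def)
  ultimately show False using m by (simp add: in_keys_iff)
qed




lemma allk_zero: "allk P 0" by (simp add: allk_def)

lemma allk_sum: "(\<And>i. i \<in> I \<Longrightarrow> allk P (f i)) \<Longrightarrow> allk P (\<Sum>i\<in>I. f i)"
  by (induct I rule: infinite_finite_induct) (auto intro: allk_add allk_zero)

lemma allk_PConst: "allk P p \<Longrightarrow> allk P (PConst c * p)"
  by (auto simp: allk_def in_keys_iff lookup_PConst_mult)

lemma lk_sumW: "lk (\<Sum>j\<in>A. PConst (c j) * (f j :: 'a::comm_ring_1 pol)) m = (\<Sum>j\<in>A. c j * lk (f j) m)"
  by (simp add: lookup_sum lookup_PConst_mult)

theorem lemma3p3:
  fixes d n l1 l2 :: nat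
  assumes "d \<ge> 2" and "n \<ge> 2" and "l1 \<ge> l2" and "l1 + l2 = n"
  shows "(\<forall>j\<in>widx l1 l2. hwv d l1 l2 (wvec l1 l2 j :: 'a::field_char_0 pol))
    \<and> (\<forall>c :: nat \<Rightarrow> 'a. (\<Sum>j\<in>widx l1 l2. PConst (c j) * wvec l1 l2 j) = 0
          \<longrightarrow> (\<forall>j\<in>widx l1 l2. c j = 0))
    \<and> (\<forall>p :: 'a pol. hwv d l1 l2 p
          \<longrightarrow> (\<exists>c. p = (\<Sum>j\<in>widx l1 l2. PConst (c j) * wvec l1 l2 j)))"
proof -
  have le: "l2 \<le> l1" using assms by simp
  have l1ge: "0 < l1" using assms by simp
  have wle: "j \<le> l1 - l2" if "j \<in> widx l1 l2" for j
    using that by (auto simp: widx_def split: if_splits)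
  have fin: "finite (widx l1 l2)" by (simp add: widx_def)
  have lkW: "lk (W l1 l2 j :: 'a pol) (M k (l1 - k) l2 0) = (if j = k then (-1) ^ l2 else 0)"
    if "j \<in> widx l1 l2" "k \<in> widx l1 l2" for j k
  proof -
    have "(k = j \<and> l1 - k = l1 - j) = (j = k)" using wle[OF that(1)] wle[OF that(2)] le by auto
    then show ?thesis using lk_W[OF wle[OF that(1)] le, of k "l1 - k"] by simp
  qed
  have P1: "\<forall>j\<in>widx l1 l2. hwv d l1 l2 (wvec l1 l2 j :: 'a pol)"
  proof
    fix j assume j: "j \<in> widx l1 l2"
    have c: "0 < l2 \<or> (0 < j \<and> j < l1)" using j assms by (auto simp: widx_def split: if_splits)
    have nz: "W l1 l2 j \<noteq> (0 :: 'a pol)"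
    proof
      assume "W l1 l2 j = (0 :: 'a pol)"
      then have "lk (W l1 l2 j :: 'a pol) (M j (l1 - j) l2 0) = 0" by simp
      then show False using lkW[OF j j] by simp
    qed
    show "hwv d l1 l2 (wvec l1 l2 j :: 'a pol)"
      unfolding hwv_def wvec_W
      using W_G2[OF assms(1) wle[OF j] c] nz W_multideg[OF wle[OF j] le] Dder_W by blast
  qed
  have P2: "\<forall>c :: nat \<Rightarrow> 'a. (\<Sum>j\<in>widx l1 l2. PConst (c j) * wvec l1 l2 j) = 0
          \<longrightarrow> (\<forall>j\<in>widx l1 l2. c j = 0)"
  proof (intro allI impI ballI)
    fix c :: "nat \<Rightarrow> 'a" and k assume H: "(\<Sum>j\<in>widx l1 l2. PConst (c j) * wvec l1 l2 j) = 0" and k: "k \<in> widx l1 l2"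
    have "0 = lk (\<Sum>j\<in>widx l1 l2. PConst (c j) * wvec l1 l2 j) (M k (l1 - k) l2 0)" unfolding H by simp
    also have "\<dots> = (\<Sum>j\<in>widx l1 l2. c j * lk (W l1 l2 j :: 'a pol) (M k (l1 - k) l2 0))"
      unfolding lk_sumW wvec_W ..
    also have "\<dots> = (\<Sum>j\<in>widx l1 l2. if j = k then c j * (-1) ^ l2 else 0)"
      by (rule sum.cong[OF refl]) (simp add: lkW k)
    also have "\<dots> = c k * (-1) ^ l2" using fin k by simp
    finally show "c k = 0" by simp
  qed
  have P3: "\<forall>p :: 'a pol. hwv d l1 l2 p \<longrightarrow> (\<exists>c. p = (\<Sum>j\<in>widx l1 l2. PConst (c j) * wvec l1 l2 j))"
  proof (intro allI impI)
    fix p :: "'a pol" assume hp: "hwv d l1 l2 p"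
    define c where "c j = (-1) ^ l2 * lk p (M j (l1 - j) l2 0)" for j
    define q where "q = p - (\<Sum>j\<in>widx l1 l2. PConst (c j) * wvec l1 l2 j)"
    have mdp: "has_multideg (lam2 l1 l2) p" using hp by (simp add: hwv_def)
    have md: "has_multideg (lam2 l1 l2) q"
      unfolding q_def has_multideg_allk wvec_W
      by (intro allk_diff allk_sum allk_PConst mdp[unfolded has_multideg_allk]
          W_multideg[OF wle le, unfolded has_multideg_allk])
    have D0: "Dder 1 2 q = 0"
    proof -
      have "Dder 1 2 p = 0" using hp assms(1) by (simp add: hwv_def)
      then show ?thesis unfolding q_def wvec_W
        by (simp add: Dder_diff Dder_sum Dder_PConst_mult Dder_W)
    qed
    have K: "lk (Dder 1 2 q) (M a e1 b e2) = 0" for a e1 b e2 unfolding D0 by simp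
    have pz: "lk p m = 0" if "\<not> (lk m (Yv 1) + lk m (Zv 1) = l1 \<and> (\<exists>i. 0 < lk m (Yv i)) \<and> (\<exists>i. 0 < lk m (Zv i)))" for m
    proof (rule ccontr)
      assume "lk p m \<noteq> 0"
      then have "m \<in> Poly_Mapping.keys p" by (simp add: in_keys_iff)
      then show False using that hp by (auto simp: hwv_def has_multideg_def G2_def lam2_def)
    qed
    have base: "lk q (M a e1 l2 0) = 0" for a e1
    proof (cases "e1 < l2")
      case True
      show ?thesis by (rule kernel_below[OF K True])
    next
      case False
      have "lk q (M a e1 l2 0) = lk p (M a e1 l2 0) - (\<Sum>j\<in>widx l1 l2. c j * lk (W l1 l2 j :: 'a pol) (M a e1 l2 0))"
        unfolding q_def lookup_minus lk_sumW wvec_W ..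
      also have "(\<Sum>j\<in>widx l1 l2. c j * lk (W l1 l2 j :: 'a pol) (M a e1 l2 0))
          = (\<Sum>j\<in>widx l1 l2. if j = a then c j * (if e1 = l1 - j then (-1) ^ l2 else 0) else 0)"
        by (rule sum.cong[OF refl]) (auto simp: lk_W[OF wle le])
      also have "\<dots> = (if a \<in> widx l1 l2 then c a * (if e1 = l1 - a then (-1) ^ l2 else 0) else 0)"
        using fin by simp
      finally have E: "lk q (M a e1 l2 0) = lk p (M a e1 l2 0) - (if a \<in> widx l1 l2 then c a * (if e1 = l1 - a then (-1) ^ l2 else 0) else 0)" .
      show ?thesis
      proof (cases "a + e1 = l1")
        case False
        have "lk p (M a e1 l2 0) = 0" by (rule pz) (use False in simp)
        moreover have "\<not> (a \<in> widx l1 l2 \<and> e1 = l1 - a)"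
        proof
          assume A: "a \<in> widx l1 l2 \<and> e1 = l1 - a"
          then have "a \<le> l1" using wle[of a] le by auto
          then show False using A False by simp
        qed
        ultimately show ?thesis unfolding E by auto
      next
        case True
        then have e1: "e1 = l1 - a" by simp
        show ?thesis
        proof (cases "a \<in> widx l1 l2")
          case True
          have "((-1) ^ l2 * (-1) ^ l2 :: 'a) = 1" by (simp flip: power_add)
          then show ?thesis unfolding E c_def using True e1 by (simp add: algebra_simps)
        next
          case False
          then have "l2 = 0" "a = 0 \<or> a = l1" using True \<open>\<not> e1 < l2\<close> by (auto simp: widx_def split: if_splits)
          then have "lk p (M a e1 l2 0) = 0"
            using True by (intro pz) auto
          then show ?thesis unfolding E using False by simp
        qed
      qed
    qed
    have "q = 0"
    proof (rule zero_from_coeffs[OF md])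
      fix a e1 b e2 assume "a + e1 = l1" "b + e2 = l2"
      then have "b = l2 - e2" "e2 \<le> l2" by auto
      then show "lk q (M a e1 b e2) = 0" using kernel_top[OF K base] by simp
    qed
    then show "\<exists>c. p = (\<Sum>j\<in>widx l1 l2. PConst (c j) * wvec l1 l2 j)" unfolding q_def by auto
  qed
  show ?thesis using P1 P2 P3 by blast
qed


end
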